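(* Let $X$ and $Y$ be arbitrary (completely regular) spaces and $F\colon\mathcal{K}(X)\to\mathcal{K}(Y)$ a map satisfying: (1) if $K,L\in\mathcal{K}(X)$ and $K\subset L$, then $F(K)\subset F(L)$; $(2)_c$ for each countable $L\in\mathcal{K}(Y)$ there is $K\in\mathcal{K}(X)$ with $L\subset F(K)$; $(3)_c$ if $U\subset X$ and $V\subset Y$ are non-empty open sets such that for each countable compact $L\subset V$ there is a compact $K\subset U$ with $L\subset F(K)$, then for any open cover $\mathcal{W}$ of $U$ and any $y\in V$ there exist a finite $\mathcal{E}\subset\mathcal{W}$ and a neighborhood $V_y$ of $y$ such that every countable compact $L\subset V_y$ satisfies $L\subset F(K)$ for some compact $K\subset\bigcup\mathcal{E}$. Then $F$ is monotone set tri-quotient.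
   Context: $\mathcal{K}(X)$ is the set of compact subsets of $X$, $\mathcal{T}(X)$ the topology of $X$. $F\colon\mathcal{K}(X)\to 2^Y$ is monotone if $K\subset L$ implies $F(K)\subset F(L)$; it is set tri-quotient if there is $s\colon\mathcal{T}(X)\to\mathcal{T}(Y)$ with: (str1) $s(U)\subset\bigcup\{F(K):K\in\mathcal{K}(X),K\subset U\}$; (str2) $s(X)=Y$; (str3) $U\subset V\Rightarrow s(U)\subset s(V)$; (str4) if $y\in s(U)$ and $\mathcal{W}$ is a cover of $\bigcup\{K\in F^{-1}(y):K\subset U\}$ by open subsets of $X$, then $y\in s(\bigcup\mathcal{E})$ for some finite $\mathcal{E}\subset\mathcal{W}$, where $F^{-1}(y)=\{K\in\mathcal{K}(X):y\in F(K)\}$. *)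

theory Defs
  imports "HOL-Analysis.Analysis"
begin

text \<open>A map F defined on the compact subsets of X (values outside K(X) are irrelevant).\<close>

definition monotone_cpt :: "'a topology \<Rightarrow> ('a set \<Rightarrow> 'b set) \<Rightarrow> bool" where
  "monotone_cpt X F \<longleftrightarrow>
     (\<forall>K L. compactin X K \<and> compactin X L \<and> K \<subseteq> L \<longrightarrow> F K \<subseteq> F L)"

text \<open>Set tri-quotient: s is only relevant on open sets of X (s : T(X) -> T(Y)).\<close>

definition set_tri_quotient ::
  "'a topology \<Rightarrow> 'b topology \<Rightarrow> ('a set \<Rightarrow> 'b set) \<Rightarrow> bool" where
  "set_tri_quotient X Y F \<longleftrightarrow>
     (\<exists>s :: 'a set \<Rightarrow> 'b set.
        (\<forall>U. openin X U \<longrightarrow> openin Y (s U)) \<and>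
        (\<forall>U. openin X U \<longrightarrow> s U \<subseteq> \<Union>{F K | K. compactin X K \<and> K \<subseteq> U}) \<and>
        s (topspace X) = topspace Y \<and>
        (\<forall>U V. openin X U \<and> openin X V \<and> U \<subseteq> V \<longrightarrow> s U \<subseteq> s V) \<and>
        (\<forall>U y \<W>. openin X U \<and> y \<in> s U \<and> (\<forall>W\<in>\<W>. openin X W) \<and>
            \<Union>{K. compactin X K \<and> y \<in> F K \<and> K \<subseteq> U} \<subseteq> \<Union>\<W>
          \<longrightarrow> (\<exists>\<E>. finite \<E> \<and> \<E> \<subseteq> \<W> \<and> y \<in> s (\<Union>\<E>))))"

definition monotone_set_tri_quotient ::
  "'a topology \<Rightarrow> 'b topology \<Rightarrow> ('a set \<Rightarrow> 'b set) \<Rightarrow> bool" where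
  "monotone_set_tri_quotient X Y F \<longleftrightarrow> monotone_cpt X F \<and> set_tri_quotient X Y F"

end

theory Submission
  imports Defs
begin

theorem proposition2p4:
  fixes X :: "'a topology" and Y :: "'b topology" and F :: "'a set \<Rightarrow> 'b set"
  assumes "completely_regular_space X" and "completely_regular_space Y"
    and maps: "\<And>K. compactin X K \<Longrightarrow> compactin Y (F K)"
    and h1: "\<And>K L. \<lbrakk>compactin X K; compactin X L; K \<subseteq> L\<rbrakk> \<Longrightarrow> F K \<subseteq> F L"
    and h2: "\<And>L. \<lbrakk>countable L; compactin Y L\<rbrakk> \<Longrightarrow> \<exists>K. compactin X K \<and> L \<subseteq> F K"
    and h3: "\<And>U V. \<lbrakk>openin X U; U \<noteq> {}; openin Y V; V \<noteq> {};
        \<forall>L. countable L \<and> compactin Y L \<and> L \<subseteq> V \<longrightarrow>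
            (\<exists>K. compactin X K \<and> K \<subseteq> U \<and> L \<subseteq> F K)\<rbrakk> \<Longrightarrow>
      \<forall>\<W> y. (\<forall>W\<in>\<W>. openin X W) \<and> U \<subseteq> \<Union>\<W> \<and> y \<in> V \<longrightarrow>
        (\<exists>\<E> Vy. finite \<E> \<and> \<E> \<subseteq> \<W> \<and> openin Y Vy \<and> y \<in> Vy \<and>
           (\<forall>L. countable L \<and> compactin Y L \<and> L \<subseteq> Vy \<longrightarrow>
              (\<exists>K. compactin X K \<and> K \<subseteq> \<Union>\<E> \<and> L \<subseteq> F K)))"
  shows "monotone_set_tri_quotient X Y F"
proof -
  define good where "good = (\<lambda>U V. \<forall>L. countable L \<and> compactin Y L \<and> L \<subseteq> V \<longrightarrow>
            (\<exists>K. compactin X K \<and> K \<subseteq> U \<and> L \<subseteq> F K))"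
  define s where "s = (\<lambda>U. \<Union>{V. openin Y V \<and> good U V})"
  have sopen: "openin Y (s U)" for U
    unfolding s_def by (rule openin_Union) auto
  have pt: "\<exists>K. compactin X K \<and> K \<subseteq> U \<and> y \<in> F K" if "y \<in> s U" for U y
  proof -
    from that obtain V where V: "openin Y V" "good U V" "y \<in> V" unfolding s_def by auto
    have "y \<in> topspace Y" using V openin_subset by blast
    then have "compactin Y {y}" by simp
    moreover have "countable {y}" by simp
    ultimately obtain K where "compactin X K" "K \<subseteq> U" "{y} \<subseteq> F K"
      using V(2,3) unfolding good_def by blast
    then show ?thesis by blast
  qed
  have str1: "s U \<subseteq> \<Union>{F K | K. compactin X K \<and> K \<subseteq> U}" for U
    using pt by blast
  have str2: "s (topspace X) = topspace Y"
  proof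
    show "s (topspace X) \<subseteq> topspace Y" unfolding s_def using openin_subset by blast
    have "good (topspace X) (topspace Y)" unfolding good_def
    proof (intro allI impI)
      fix L assume "countable L \<and> compactin Y L \<and> L \<subseteq> topspace Y"
      then obtain K where "compactin X K" "L \<subseteq> F K" using h2 by blast
      moreover have "K \<subseteq> topspace X" using compactin_subset_topspace[OF \<open>compactin X K\<close>] .
      ultimately show "\<exists>K. compactin X K \<and> K \<subseteq> topspace X \<and> L \<subseteq> F K" by blast
    qed
    then show "topspace Y \<subseteq> s (topspace X)" unfolding s_def by auto
  qed
  have str3: "s U \<subseteq> s V" if "U \<subseteq> V" for U V
  proof -
    have "good U W \<Longrightarrow> good V W" for W
      using that unfolding good_def by (meson order_trans)
    then show ?thesis unfolding s_def by blast
  qed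
  have str4: "\<exists>\<E>. finite \<E> \<and> \<E> \<subseteq> \<W> \<and> y \<in> s (\<Union>\<E>)"
    if U: "openin X U" and y: "y \<in> s U" and W: "\<forall>W\<in>\<W>. openin X W"
      and C: "\<Union>{K. compactin X K \<and> y \<in> F K \<and> K \<subseteq> U} \<subseteq> \<Union>\<W>" for U y \<W>
  proof (cases "U = {}")
    case True
    then have "y \<in> s (\<Union>{})" using y by simp
    then show ?thesis by blast
  next
    case False
    from pt[OF y] obtain K1 where K1: "compactin X K1" "K1 \<subseteq> U" "y \<in> F K1" by blast
    have cov: "U \<subseteq> \<Union>\<W>"
    proof
      fix x assume x: "x \<in> U"
      then have "x \<in> topspace X" using U openin_subset by blast
      then have c: "compactin X (insert x K1)" using K1 compactin_Un[of X "{x}" K1] by simp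
      have "y \<in> F (insert x K1)" using h1[OF K1(1) c] K1 by blast
      then show "x \<in> \<Union>\<W>" using C c K1 x by blast
    qed
    from y obtain V where V: "openin Y V" "good U V" "y \<in> V" unfolding s_def by auto
    have Vne: "V \<noteq> {}" using V(3) by blast
    have hh: "\<exists>\<E> Vy. finite \<E> \<and> \<E> \<subseteq> \<W> \<and> openin Y Vy \<and> y \<in> Vy \<and>
           (\<forall>L. countable L \<and> compactin Y L \<and> L \<subseteq> Vy \<longrightarrow>
              (\<exists>K. compactin X K \<and> K \<subseteq> \<Union>\<E> \<and> L \<subseteq> F K))"
      using h3[OF U False V(1) Vne V(2)[unfolded good_def], rule_format, of \<W> y] V(3) W cov
      by blast
    from hh obtain \<E> Vy where E: "finite \<E>" "\<E> \<subseteq> \<W>" "openin Y Vy" "y \<in> Vy"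
      "\<forall>L. countable L \<and> compactin Y L \<and> L \<subseteq> Vy \<longrightarrow>
              (\<exists>K. compactin X K \<and> K \<subseteq> \<Union>\<E> \<and> L \<subseteq> F K)" by (elim exE conjE) blast
    have "good (\<Union>\<E>) Vy" unfolding good_def using E(5) by blast
    then have "y \<in> s (\<Union>\<E>)" unfolding s_def using E(3,4) by blast
    then show ?thesis using E by blast
  qed
  have "set_tri_quotient X Y F"
    unfolding set_tri_quotient_def
    apply (rule exI[of _ s])
    apply (intro conjI allI impI)
        apply (rule sopen)
       apply (rule str1)
      apply (rule str2)
     apply (rule str3, blast)
    apply (rule str4; blast)
    done
  moreover have "monotone_cpt X F" unfolding monotone_cpt_def using h1 by blast
  ultimately show ?thesis unfolding monotone_set_tri_quotient_def by blast
qed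

end
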